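(* For every $(w_1,w_2)\in\mathcal{A}$ the equation $f(X):=X-f_1(f_2(X))=0$ admits a unique positive solution $X_0$. Consequently, setting $e^{c_1}=X_0$ and $e^{c_2}=f_2(X_0)$, the pair $v_i=w_i+c_i$ ($i=1,2$) satisfies $$(N-1+\kappa)\int_\Omega e^{2u_1^0+2v_1}-N\int_\Omega e^{u_1^0+v_1}-(\kappa-1)\int_\Omega e^{u_1^0+u_2^0+v_1+v_2}+\frac{b_1}{\lambda}=0,$$ $$\Big(\frac1{N-1}+\kappa\Big)\int_\Omega e^{2u_2^0+2v_2}-\frac N{N-1}\int_\Omega e^{u_2^0+v_2}-(\kappa-1)\int_\Omega e^{u_1^0+u_2^0+v_1+v_2}+\frac{b_2}{\lambda}=0.$$
   Context: Standing setting (doubly periodic case): $N\ge2$ integer, $\kappa>1$, $\lambda>0$; $\Omega$ a doubly periodic domain (flat torus) of area $|\Omega|$; integers $n_1,n_2\ge0$ and points $p_{is}\in\Omega$. $W^{1,2}(\Omega)$ = $\Omega$-periodic $L^2$ functions with $L^2$ gradient, $\dot W^{1,2}(\Omega)=\{w\in W^{1,2}(\Omega):\int_\Omega w=0\}$. $u_i^0$ solves $\Delta u_i^0=4\pi\sum_{s=1}^{n_i}\delta_{p_{is}}-\frac{4\pi n_i}{|\Omega|}$, $\int_\Omega u_i^0=0$. Set $b_1=\frac{4\pi((1+(N-1)\kappa)n_1+(\kappa-1)n_2)}{\kappa}$, $b_2=\frac{4\pi((N-1)(\kappa-1)n_1+(N-1+\kappa)n_2)}{(N-1)\kappa}$. The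 admissible set $\mathcal A$ is the set of $(w_1,w_2)\in\dot W^{1,2}(\Omega)\times\dot W^{1,2}(\Omega)$ with $$\Big(\int_\Omega e^{u_1^0+w_1}\Big)^2\ge\frac{4(N-1+\kappa)b_1}{N^2\lambda}\int_\Omega e^{2u_1^0+2w_1},\qquad \Big(\int_\Omega e^{u_2^0+w_2}\Big)^2\ge\frac{4(N-1)(1+(N-1)\kappa)b_2}{N^2\lambda}\int_\Omega e^{2u_2^0+2w_2}.$$ For $(w_1,w_2)\in\mathcal A$ and $X,Y\ge0$ let $E_{12}=\int_\Omega e^{u_1^0+u_2^0+w_1+w_2}$, $P_1(Y)=N\int_\Omega e^{u_1^0+w_1}+(\kappa-1)YE_{12}$, $P_2(X)=\frac N{N-1}\int_\Omega e^{u_2^0+w_2}+(\kappa-1)XE_{12}$, $$f_1(Y)=\frac{P_1(Y)+\sqrt{P_1(Y)^2-\frac{4(N-1+\kappa)b_1}{\lambda}\int_\Omega e^{2u_1^0+2w_1}}}{2(N-1+\kappa)\int_\Omega e^{2u_1^0+2w_1}},\quad f_2(X)=\frac{P_2(X)+\sqrt{P_2(X)^2-\frac{4(1+(N-1)\kappa)b_2}{(N-1)\lambda}\int_\Omega e^{2u_2^0+2w_2}}}{2\big(\frac1{N-1}+\kappa\big)\int_\Omega e^{2u_2^0+2w_2}}.$$ *)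

theory Defs
  imports "HOL-Analysis.Analysis"
begin

type_synonym pt = "real \<times> real"

text \<open>The flat torus: lattice generated by w1, w2 (linearly independent); the fundamental cell.\<close>
definition lattice_ok :: "pt \<Rightarrow> pt \<Rightarrow> bool" where
  "lattice_ok w1 w2 \<longleftrightarrow> fst w1 * snd w2 - snd w1 * fst w2 \<noteq> 0"

definition cell :: "pt \<Rightarrow> pt \<Rightarrow> pt set" where
  "cell w1 w2 = {s *\<^sub>R w1 + t *\<^sub>R w2 | s t. 0 \<le> s \<and> s < 1 \<and> 0 \<le> t \<and> t < 1}"

definition area :: "pt \<Rightarrow> pt \<Rightarrow> real" where
  "area w1 w2 = measure lborel (cell w1 w2)"

definition periodic2 :: "pt \<Rightarrow> pt \<Rightarrow> (pt \<Rightarrow> real) \<Rightarrow> bool" where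
  "periodic2 w1 w2 f \<longleftrightarrow> (\<forall>x. f (x + w1) = f x \<and> f (x + w2) = f x)"

definition cint :: "pt \<Rightarrow> pt \<Rightarrow> (pt \<Rightarrow> real) \<Rightarrow> real" where
  "cint w1 w2 f = (LINT x : cell w1 w2 | lborel. f x)"

definition part1 :: "(pt \<Rightarrow> real) \<Rightarrow> pt \<Rightarrow> real" where
  "part1 f p = deriv (\<lambda>t. f (t, snd p)) (fst p)"

definition part2 :: "(pt \<Rightarrow> real) \<Rightarrow> pt \<Rightarrow> real" where
  "part2 f p = deriv (\<lambda>t. f (fst p, t)) (snd p)"

definition C1fun :: "(pt \<Rightarrow> real) \<Rightarrow> bool" where
  "C1fun f \<longleftrightarrow> continuous_on UNIV f \<and>
     (\<forall>p. (\<lambda>t. f (t, snd p)) differentiable (at (fst p)) \<and>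
          (\<lambda>t. f (fst p, t)) differentiable (at (snd p))) \<and>
     continuous_on UNIV (part1 f) \<and> continuous_on UNIV (part2 f)"

definition C2fun :: "(pt \<Rightarrow> real) \<Rightarrow> bool" where
  "C2fun f \<longleftrightarrow> C1fun f \<and> C1fun (part1 f) \<and> C1fun (part2 f)"

definition lap :: "(pt \<Rightarrow> real) \<Rightarrow> pt \<Rightarrow> real" where
  "lap f p = part1 (part1 f) p + part2 (part2 f) p"

definition L2per :: "pt \<Rightarrow> pt \<Rightarrow> (pt \<Rightarrow> real) \<Rightarrow> bool" where
  "L2per w1 w2 f \<longleftrightarrow> periodic2 w1 w2 f \<and> f \<in> borel_measurable lborel \<and>
     set_integrable lborel (cell w1 w2) (\<lambda>x. (f x)\<^sup>2)"

definition W12 :: "pt \<Rightarrow> pt \<Rightarrow> (pt \<Rightarrow> real) \<Rightarrow> bool" where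
  "W12 w1 w2 f \<longleftrightarrow> L2per w1 w2 f \<and>
     (\<exists>g1 g2. L2per w1 w2 g1 \<and> L2per w1 w2 g2 \<and>
       (\<forall>\<phi>. C1fun \<phi> \<and> periodic2 w1 w2 \<phi> \<longrightarrow>
          cint w1 w2 (\<lambda>x. f x * part1 \<phi> x) = - cint w1 w2 (\<lambda>x. g1 x * \<phi> x) \<and>
          cint w1 w2 (\<lambda>x. f x * part2 \<phi> x) = - cint w1 w2 (\<lambda>x. g2 x * \<phi> x)))"

definition W12dot :: "pt \<Rightarrow> pt \<Rightarrow> (pt \<Rightarrow> real) \<Rightarrow> bool" where
  "W12dot w1 w2 f \<longleftrightarrow> W12 w1 w2 f \<and> cint w1 w2 f = 0"

text \<open>u solves  Delta u = 4 pi sum_{s=1..n} delta_{p s} - 4 pi n/|Omega|  (weakly, on the torus), int u = 0.\<close>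
definition u0_sol :: "pt \<Rightarrow> pt \<Rightarrow> nat \<Rightarrow> (nat \<Rightarrow> pt) \<Rightarrow> (pt \<Rightarrow> real) \<Rightarrow> bool" where
  "u0_sol w1 w2 n p u \<longleftrightarrow> periodic2 w1 w2 u \<and> u \<in> borel_measurable lborel \<and>
     set_integrable lborel (cell w1 w2) u \<and> cint w1 w2 u = 0 \<and>
     (\<forall>\<phi>. C2fun \<phi> \<and> periodic2 w1 w2 \<phi> \<longrightarrow>
        cint w1 w2 (\<lambda>x. u x * lap \<phi> x) =
          4 * pi * (\<Sum>s = 1..n. \<phi> (p s)) - 4 * pi * real n / area w1 w2 * cint w1 w2 \<phi>)"

definition bb1 :: "nat \<Rightarrow> real \<Rightarrow> nat \<Rightarrow> nat \<Rightarrow> real" where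
  "bb1 N \<kappa> n1 n2 = 4 * pi * ((1 + (real N - 1) * \<kappa>) * real n1 + (\<kappa> - 1) * real n2) / \<kappa>"

definition bb2 :: "nat \<Rightarrow> real \<Rightarrow> nat \<Rightarrow> nat \<Rightarrow> real" where
  "bb2 N \<kappa> n1 n2 = 4 * pi * ((real N - 1) * (\<kappa> - 1) * real n1 + (real N - 1 + \<kappa>) * real n2)
                     / ((real N - 1) * \<kappa>)"

definition admissible ::
  "nat \<Rightarrow> real \<Rightarrow> real \<Rightarrow> pt \<Rightarrow> pt \<Rightarrow> nat \<Rightarrow> nat \<Rightarrow> (pt \<Rightarrow> real) \<Rightarrow> (pt \<Rightarrow> real)
    \<Rightarrow> (pt \<Rightarrow> real) \<Rightarrow> (pt \<Rightarrow> real) \<Rightarrow> bool" where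
  "admissible N \<kappa> lam w1 w2 n1 n2 u1 u2 v1 v2 \<longleftrightarrow>
     W12dot w1 w2 v1 \<and> W12dot w1 w2 v2 \<and>
     (cint w1 w2 (\<lambda>x. exp (u1 x + v1 x)))\<^sup>2 \<ge>
        4 * (real N - 1 + \<kappa>) * bb1 N \<kappa> n1 n2 / ((real N)\<^sup>2 * lam) *
          cint w1 w2 (\<lambda>x. exp (2 * u1 x + 2 * v1 x)) \<and>
     (cint w1 w2 (\<lambda>x. exp (u2 x + v2 x)))\<^sup>2 \<ge>
        4 * (real N - 1) * (1 + (real N - 1) * \<kappa>) * bb2 N \<kappa> n1 n2 / ((real N)\<^sup>2 * lam) *
          cint w1 w2 (\<lambda>x. exp (2 * u2 x + 2 * v2 x))"

text \<open>f_1(Y), f_2(X) in terms of the integrals A_i = int e^{u_i+w_i}, B_i = int e^{2u_i+2w_i}, E = E_12.\<close>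
definition ff1 :: "nat \<Rightarrow> real \<Rightarrow> real \<Rightarrow> real \<Rightarrow> real \<Rightarrow> real \<Rightarrow> real \<Rightarrow> real \<Rightarrow> real" where
  "ff1 N \<kappa> lam b1 A1 B1 E Y =
     (let P = real N * A1 + (\<kappa> - 1) * Y * E in
      (P + sqrt (P\<^sup>2 - 4 * (real N - 1 + \<kappa>) * b1 / lam * B1)) / (2 * (real N - 1 + \<kappa>) * B1))"

definition ff2 :: "nat \<Rightarrow> real \<Rightarrow> real \<Rightarrow> real \<Rightarrow> real \<Rightarrow> real \<Rightarrow> real \<Rightarrow> real \<Rightarrow> real" where
  "ff2 N \<kappa> lam b2 A2 B2 E X =
     (let P = real N / (real N - 1) * A2 + (\<kappa> - 1) * X * E in
      (P + sqrt (P\<^sup>2 - 4 * (1 + (real N - 1) * \<kappa>) * b2 / ((real N - 1) * lam) * B2))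
        / (2 * (1 / (real N - 1) + \<kappa>) * B2))"

end

theory Submission
  imports Defs
begin



lemma cell_char:
  assumes "lattice_ok w1 w2"
  defines "d \<equiv> fst w1 * snd w2 - snd w1 * fst w2"
  shows "cell w1 w2 = {x. 0 \<le> (fst x * snd w2 - snd x * fst w2)/d \<and> (fst x * snd w2 - snd x * fst w2)/d < 1
        \<and> 0 \<le> (fst w1 * snd x - snd w1 * fst x)/d \<and> (fst w1 * snd x - snd w1 * fst x)/d < 1}"
proof -
  have d: "d \<noteq> 0" using assms unfolding lattice_ok_def d_def by auto
  show ?thesis
  proof (intro set_eqI iffI)
    fix x assume "x \<in> cell w1 w2"
    then obtain s t where st: "0 \<le> s" "s < 1" "0 \<le> t" "t < 1" "x = s *\<^sub>R w1 + t *\<^sub>R w2"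
      unfolding cell_def by auto
    have 1: "(fst x * snd w2 - snd x * fst w2)/d = s" using d unfolding st(5) d_def
      by (simp add: field_simps)
    have 2: "(fst w1 * snd x - snd w1 * fst x)/d = t" using d unfolding st(5) d_def
      by (simp add: field_simps)
    show "x \<in> {x. 0 \<le> (fst x * snd w2 - snd x * fst w2)/d \<and> (fst x * snd w2 - snd x * fst w2)/d < 1
        \<and> 0 \<le> (fst w1 * snd x - snd w1 * fst x)/d \<and> (fst w1 * snd x - snd w1 * fst x)/d < 1}" using st 1 2 by simp
  next
    fix x assume x: "x \<in> {x. 0 \<le> (fst x * snd w2 - snd x * fst w2)/d \<and> (fst x * snd w2 - snd x * fst w2)/d < 1
        \<and> 0 \<le> (fst w1 * snd x - snd w1 * fst x)/d \<and> (fst w1 * snd x - snd w1 * fst x)/d < 1}"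
    define s where "s = (fst x * snd w2 - snd x * fst w2)/d"
    define t where "t = (fst w1 * snd x - snd w1 * fst x)/d"
    have e1: "(s * fst w1 + t * fst w2) * d = fst x * d" unfolding s_def t_def using d
      by (simp add: field_simps) (simp add: d_def algebra_simps)
    have e2: "(s * snd w1 + t * snd w2) * d = snd x * d" unfolding s_def t_def using d
      by (simp add: field_simps) (simp add: d_def algebra_simps)
    have "x = s *\<^sub>R w1 + t *\<^sub>R w2"
      using e1 e2 d by (simp add: prod_eq_iff)
    then show "x \<in> cell w1 w2" unfolding cell_def using x s_def t_def by auto
  qed
qed

lemma cell_geom:
  assumes "lattice_ok w1 w2"
  shows "cell w1 w2 \<in> sets lborel" "emeasure lborel (cell w1 w2) < \<infinity>"
    "\<exists>m r. r > 0 \<and> ball m r \<subseteq> cell w1 w2"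
proof -
  define d where "d \<equiv> fst w1 * snd w2 - snd w1 * fst w2"
  have d: "d \<noteq> 0" using assms unfolding lattice_ok_def d_def by auto
  define l1 where "l1 = (\<lambda>x::pt. (fst x * snd w2 - snd x * fst w2)/d)"
  define l2 where "l2 = (\<lambda>x::pt. (fst w1 * snd x - snd w1 * fst x)/d)"
  have C: "cell w1 w2 = {x. 0 \<le> l1 x \<and> l1 x < 1 \<and> 0 \<le> l2 x \<and> l2 x < 1}"
    using cell_char[OF assms] unfolding l1_def l2_def d_def by simp
  have c12: "continuous_on UNIV l1" "continuous_on UNIV l2" unfolding l1_def l2_def
    using d by (auto intro!: continuous_intros)
  have [measurable]: "l1 \<in> borel_measurable borel" "l2 \<in> borel_measurable borel"
    using c12 by (auto intro: borel_measurable_continuous_onI)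
  have "{x \<in> space lborel. 0 \<le> l1 x \<and> l1 x < 1 \<and> 0 \<le> l2 x \<and> l2 x < 1} \<in> sets lborel"
    by measurable
  then show "cell w1 w2 \<in> sets lborel" unfolding C by simp
  have "cell w1 w2 \<subseteq> cball 0 (norm w1 + norm w2)"
  proof
    fix x assume "x \<in> cell w1 w2"
    then obtain s t where st: "0 \<le> s" "s < 1" "0 \<le> t" "t < 1" "x = s *\<^sub>R w1 + t *\<^sub>R w2"
      unfolding cell_def by auto
    have "norm (s *\<^sub>R w1 + t *\<^sub>R w2) \<le> norm (s *\<^sub>R w1) + norm (t *\<^sub>R w2)"
      by (rule norm_triangle_ineq)
    also have "\<dots> = s * norm w1 + t * norm w2" using st by simp
    also have "\<dots> \<le> norm w1 + norm w2" using st
      by (intro add_mono mult_left_le_one_le) auto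
    finally show "x \<in> cball 0 (norm w1 + norm w2)" using st by simp
  qed
  then have "bounded (cell w1 w2)" using bounded_cball bounded_subset by blast
  then show "emeasure lborel (cell w1 w2) < \<infinity>" by (rule emeasure_bounded_finite)
  define U where "U = {x. 0 < l1 x \<and> l1 x < 1 \<and> 0 < l2 x \<and> l2 x < 1}"
  from c12 have oU: "open U" unfolding U_def
    by (intro open_Collect_conj open_Collect_less continuous_intros) auto
  define m where "m = (w1 + w2) /\<^sub>R 2"
  have h1: "fst m * snd w2 - snd m * fst w2 = d/2"
    by (simp add: m_def d_def algebra_simps)
  have h2: "fst w1 * snd m - snd w1 * fst m = d/2"
    by (simp add: m_def d_def algebra_simps)
  have "l1 m = 1/2" "l2 m = 1/2" unfolding l1_def l2_def h1 h2 using d by simp_all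
  then have "m \<in> U" unfolding U_def by simp
  with oU obtain r where "r > 0" "ball m r \<subseteq> U"
    by (meson open_contains_ball)
  moreover have "U \<subseteq> cell w1 w2" unfolding C U_def by auto
  ultimately show "\<exists>m r. r > 0 \<and> ball m r \<subseteq> cell w1 w2" by blast
qed

lemma pos_set_integral:
  fixes g :: "pt \<Rightarrow> real"
  assumes i: "set_integrable lborel C g" and g: "\<And>x. g x > 0" and C: "C \<in> sets lborel"
    and r: "r > 0" "ball m r \<subseteq> C"
  shows "(LINT x:C|lborel. g x) > 0"
proof -
  have i': "integrable lborel (\<lambda>x. indicator C x *\<^sub>R g x)" using i unfolding set_integrable_def .
  have nn: "AE x in lborel. 0 \<le> indicator C x *\<^sub>R g x" using g by (simp add: less_imp_le)
  have ge: "(LINT x:C|lborel. g x) \<ge> 0" unfolding set_lebesgue_integral_def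
    using nn by (simp add: integral_nonneg_AE)
  show ?thesis
  proof (rule ccontr)
    assume "\<not> ?thesis"
    then have "(LINT x:C|lborel. g x) = 0" using ge by simp
    then have "AE x in lborel. indicator C x *\<^sub>R g x = 0"
      using integral_nonneg_eq_0_iff_AE[OF i' nn] unfolding set_lebesgue_integral_def by simp
    moreover have "x \<notin> ball m r" if "indicator C x *\<^sub>R g x = 0" for x
    proof
      assume "x \<in> ball m r"
      then have "x \<in> C" using r by auto
      then show False using that g[of x] by simp
    qed
    ultimately have "AE x in lborel. x \<notin> ball m r"
      by (auto elim: AE_mp)
    then have "ball m r \<in> null_sets lborel"
      by (subst AE_iff_null_sets) auto
    then have "measure lborel (ball m r) = 0" by (simp add: measure_def null_setsD1)
    with content_ball_pos[OF r(1), of m] show False by simp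
  qed
qed

lemma exp_facts:
  fixes u v :: "pt \<Rightarrow> real" and C :: "pt set"
  assumes C[measurable]: "C \<in> sets lborel" and Cf: "emeasure lborel C < \<infinity>" and r: "r > 0" "ball m r \<subseteq> C"
   and [measurable]: "u \<in> borel_measurable lborel" "v \<in> borel_measurable lborel"
   and i: "set_integrable lborel C (\<lambda>x. exp (2 * u x + 2 * v x))"
  shows "(LINT x:C|lborel. exp (u x + v x)) > 0" "(LINT x:C|lborel. exp (2 * u x + 2 * v x)) > 0"
proof -
  have i1: "set_integrable lborel C (\<lambda>x. 1::real)"
    unfolding set_integrable_def using C Cf by (simp add: integrable_indicator)
  have "set_integrable lborel C (\<lambda>x. exp (2 * u x + 2 * v x) + 1)"
    using i i1 by (rule set_integral_add(1))
  then have "set_integrable lborel C (\<lambda>x. exp (u x + v x))"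
  proof (rule set_integrable_bound)
    show "set_borel_measurable lborel C (\<lambda>x. exp (u x + v x))"
      unfolding set_borel_measurable_def by measurable
    show "AE x in lborel. x \<in> C \<longrightarrow> norm (exp (u x + v x)) \<le> norm (exp (2 * u x + 2 * v x) + 1)"
    proof (rule AE_I2, intro impI)
      fix x
      have "exp (u x + v x) \<le> exp (2 * u x + 2 * v x) + 1"
      proof (cases "u x + v x \<le> 0")
        case True then show ?thesis by (smt (verit) exp_gt_zero exp_le_one_iff)
      next
        case False then have "u x + v x \<le> 2 * u x + 2 * v x" by simp
        then show ?thesis by (smt (verit) exp_le_cancel_iff)
      qed
      then show "norm (exp (u x + v x)) \<le> norm (exp (2 * u x + 2 * v x) + 1)" by simp
    qed
  qed
  then show "(LINT x:C|lborel. exp (u x + v x)) > 0"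
    by (rule pos_set_integral) (use C r in auto)
  show "(LINT x:C|lborel. exp (2 * u x + 2 * v x)) > 0"
    using i by (rule pos_set_integral) (use C r in auto)
qed

lemma cs_lemma:
  fixes u1 v1 u2 v2 :: "pt \<Rightarrow> real" and C :: "pt set"
  assumes C[measurable]: "C \<in> sets lborel"
   and [measurable]: "u1 \<in> borel_measurable lborel" "v1 \<in> borel_measurable lborel"
     "u2 \<in> borel_measurable lborel" "v2 \<in> borel_measurable lborel"
   and i1: "set_integrable lborel C (\<lambda>x. exp (2 * u1 x + 2 * v1 x))"
   and i2: "set_integrable lborel C (\<lambda>x. exp (2 * u2 x + 2 * v2 x))"
   and t: "t > 0"
  shows "(LINT x:C|lborel. exp (u1 x + u2 x + v1 x + v2 x)) \<le>
     (t * (LINT x:C|lborel. exp (2 * u1 x + 2 * v1 x)) + (LINT x:C|lborel. exp (2 * u2 x + 2 * v2 x)) / t) / 2"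
proof -
  have ib: "set_integrable lborel C (\<lambda>x. (t * exp (2 * u1 x + 2 * v1 x) + exp (2 * u2 x + 2 * v2 x) / t) / 2)"
    using i1 i2 by (intro set_integrable_divide set_integral_add(1) set_integrable_mult_right) auto
  have pt: "exp (u1 x + u2 x + v1 x + v2 x) \<le> (t * exp (2 * u1 x + 2 * v1 x) + exp (2 * u2 x + 2 * v2 x) / t) / 2" for x
  proof -
    define p where "p = exp (u1 x + v1 x)"
    define q where "q = exp (u2 x + v2 x)"
    have 1: "exp (u1 x + u2 x + v1 x + v2 x) = p * q" unfolding p_def q_def by (simp add: exp_add[symmetric] algebra_simps)
    have 2: "exp (2 * u1 x + 2 * v1 x) = p^2" unfolding p_def by (simp add: exp_add[symmetric] power2_eq_square exp_double[symmetric] algebra_simps)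
    have 3: "exp (2 * u2 x + 2 * v2 x) = q^2" unfolding q_def by (simp add: exp_add[symmetric] power2_eq_square exp_double[symmetric] algebra_simps)
    have "0 \<le> (t * p - q)^2 / t" using t by simp
    then have "2 * p * q \<le> t * p^2 + q^2 / t" using t by (simp add: field_simps power2_eq_square)
    then show ?thesis unfolding 1 2 3 by simp
  qed
  have ie: "set_integrable lborel C (\<lambda>x. exp (u1 x + u2 x + v1 x + v2 x))"
    using ib
  proof (rule set_integrable_bound)
    show "set_borel_measurable lborel C (\<lambda>x. exp (u1 x + u2 x + v1 x + v2 x))"
      unfolding set_borel_measurable_def by measurable
    show "AE x in lborel. x \<in> C \<longrightarrow> norm (exp (u1 x + u2 x + v1 x + v2 x)) \<le>
      norm ((t * exp (2 * u1 x + 2 * v1 x) + exp (2 * u2 x + 2 * v2 x) / t) / 2)"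
      using pt t by (intro AE_I2) (auto intro: order_trans[OF _ abs_ge_self])
  qed
  have "(LINT x:C|lborel. exp (u1 x + u2 x + v1 x + v2 x)) \<le>
     (LINT x:C|lborel. (t * exp (2 * u1 x + 2 * v1 x) + exp (2 * u2 x + 2 * v2 x) / t) / 2)"
    using ie ib pt by (intro set_integral_mono) auto
  also have "\<dots> = (t * (LINT x:C|lborel. exp (2 * u1 x + 2 * v1 x)) + (LINT x:C|lborel. exp (2 * u2 x + 2 * v2 x)) / t) / 2"
    using i1 i2 by (simp add: set_integral_add set_integral_divide_zero)
  finally show ?thesis .
qed



definition GG :: "real \<Rightarrow> real \<Rightarrow> real \<Rightarrow> real" where
  "GG D K P = (P + sqrt (P^2 - K)) / D"

lemma GG_mono:
  assumes "D > 0" "0 \<le> P" "K \<le> P^2" "P \<le> Q"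
  shows "GG D K P \<le> GG D K Q"
proof -
  have "P^2 \<le> Q^2" using assms by (intro power_mono) auto
  then have "sqrt (P^2 - K) \<le> sqrt (Q^2 - K)" by simp
  then show ?thesis unfolding GG_def using assms by (intro divide_right_mono add_mono) auto
qed

lemma GG_lower:
  assumes "D > 0" "K \<le> P^2"
  shows "P / D \<le> GG D K P"
  unfolding GG_def using assms by (intro divide_right_mono) auto

lemma GG_upper:
  assumes "D > 0" "0 \<le> P" "0 \<le> K"
  shows "GG D K P \<le> 2 * P / D"
proof -
  have "sqrt (P^2 - K) \<le> sqrt (P^2)" using assms by (intro real_sqrt_le_mono) simp
  also have "\<dots> = P" using assms by simp
  finally have "P + sqrt (P^2 - K) \<le> 2 * P" by linarith
  then show ?thesis unfolding GG_def using assms by (intro divide_right_mono) auto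
qed

lemma sq_concave:
  fixes K P Q t :: real
  assumes "0 \<le> K" "0 \<le> P" "0 \<le> Q" "K \<le> P^2" "K \<le> Q^2" "0 \<le> t" "t \<le> 1"
  shows "t * sqrt (P^2 - K) + (1 - t) * sqrt (Q^2 - K) \<le> sqrt ((t * P + (1 - t) * Q)^2 - K)"
proof -
  define a where "a = sqrt (P^2 - K)"
  define b where "b = sqrt (Q^2 - K)"
  have a: "a \<ge> 0" "a^2 = P^2 - K" unfolding a_def using assms by auto
  have b: "b \<ge> 0" "b^2 = Q^2 - K" unfolding b_def using assms by auto
  have PQ: "K \<le> P * Q"
  proof (cases "P \<le> Q")
    case True
    then have "P^2 \<le> P * Q" using assms by (simp add: power2_eq_square mult_left_mono)
    then show ?thesis using assms by simp
  next
    case False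
    then have "Q^2 \<le> P * Q" using assms by (simp add: power2_eq_square mult_right_mono)
    then show ?thesis using assms by simp
  qed
  have "(a * b)^2 \<le> (P * Q - K)^2"
  proof -
    have "(a*b)^2 = (P^2 - K) * (Q^2 - K)" using a b by (simp add: power_mult_distrib)
    also have "\<dots> = (P * Q - K)^2 - K * (P - Q)^2" by (simp add: power2_eq_square algebra_simps)
    also have "\<dots> \<le> (P * Q - K)^2" using assms by simp
    finally show ?thesis .
  qed
  then have ab: "a * b \<le> P * Q - K"
    by (rule power2_le_imp_le) (use PQ in linarith)
  have "(t * a + (1 - t) * b)^2 = t^2 * a^2 + (1-t)^2 * b^2 + 2 * (t * (1 - t)) * (a * b)"
    by (simp add: power2_eq_square algebra_simps)
  also have "\<dots> \<le> t^2 * a^2 + (1-t)^2 * b^2 + 2 * (t * (1 - t)) * (P * Q - K)"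
    using ab assms by (intro add_left_mono mult_left_mono) auto
  also have "\<dots> = (t * P + (1 - t) * Q)^2 - K" unfolding a b by (simp add: power2_eq_square algebra_simps)
  finally show ?thesis unfolding a_def[symmetric] b_def[symmetric] by (rule real_le_rsqrt)
qed

lemma GG_concave:
  assumes "D > 0" "0 \<le> K" "0 \<le> P" "0 \<le> Q" "K \<le> P^2" "K \<le> Q^2" "0 \<le> t" "t \<le> 1"
  shows "t * GG D K P + (1 - t) * GG D K Q \<le> GG D K (t * P + (1 - t) * Q)"
proof -
  have "t * GG D K P + (1 - t) * GG D K Q =
      ((t * P + (1 - t) * Q) + (t * sqrt (P^2 - K) + (1 - t) * sqrt (Q^2 - K))) / D"
    unfolding GG_def using assms by (simp add: field_simps)
  also have "\<dots> \<le> GG D K (t * P + (1 - t) * Q)"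
    unfolding GG_def using sq_concave[OF assms(2-)] assms(1) by (intro divide_right_mono) auto
  finally show ?thesis .
qed

lemma GG_root:
  assumes "a \<noteq> 0" "4 * a * c \<le> P^2"
  shows "a * (GG (2*a) (4*a*c) P)^2 - P * GG (2*a) (4*a*c) P + c = 0"
proof -
  define s where "s = sqrt (P^2 - 4*a*c)"
  have s: "s^2 = P^2 - 4*a*c" unfolding s_def using assms by simp
  have "a * ((P + s) / (2*a))^2 - P * ((P + s) / (2*a)) + c = (s^2 - (P^2 - 4*a*c)) / (4 * a)"
    using assms(1) by (simp add: field_simps power2_eq_square)
  also have "\<dots> = 0" using s by simp
  finally show ?thesis unfolding GG_def s_def .
qed



lemma aff_lemma:
  fixes t a k X e :: real
  shows "t * (a + k * X * e) + (1 - t) * (a + k * 0 * e) = a + k * (t * X) * e"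
  by (simp add: algebra_simps)

lemma ab_lemma:
  fixes p a c E X D1 D2 :: real
  assumes "D1 \<noteq> 0" "D2 \<noteq> 0"
  shows "2 * (p + c * E * (2 * (a + c * X * E) / D2)) / D1 =
    2 * (p + c * E * (2 * a / D2)) / D1 + 2 * (c * E * (2 * (c * E) / D2)) / D1 * X"
  using assms by (simp add: field_simps)

lemma K2_helper2:
  fixes q lam k b B :: real
  assumes "q \<noteq> 0" "lam \<noteq> 0"
  shows "4 * (1 + q * k) * b / (q * lam) * B = 4 * ((1 / q + k) * B) * (b / lam)"
  using assms by (simp add: field_simps)

lemma K2_helper:
  fixes r q lam k b B :: real
  assumes "r \<noteq> 0" "q \<noteq> 0" "lam \<noteq> 0"
  shows "4 * (1 + q * k) * b / (q * lam) * B = (r / q)^2 * (4 * q * (1 + q * k) * b / (r^2 * lam) * B)"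
  using assms by (simp add: field_simps power2_eq_square)

theorem proposition1:
  fixes N n1 n2 :: nat and \<kappa> lam :: real and w1 w2 :: pt
    and p1 p2 :: "nat \<Rightarrow> pt" and u1 u2 v1 v2 :: "pt \<Rightarrow> real"
  assumes N: "N \<ge> 2" and kappa: "\<kappa> > 1" and lam: "lam > 0"
    and lat: "lattice_ok w1 w2"
    and pts1: "\<forall>s\<in>{1..n1}. p1 s \<in> cell w1 w2"
    and pts2: "\<forall>s\<in>{1..n2}. p2 s \<in> cell w1 w2"
    and u1: "u0_sol w1 w2 n1 p1 u1" and u2: "u0_sol w1 w2 n2 p2 u2"
    and adm: "admissible N \<kappa> lam w1 w2 n1 n2 u1 u2 v1 v2"
    and int1: "set_integrable lborel (cell w1 w2) (\<lambda>x. exp (2 * u1 x + 2 * v1 x))"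
    and int2: "set_integrable lborel (cell w1 w2) (\<lambda>x. exp (2 * u2 x + 2 * v2 x))"
  defines "b1 \<equiv> bb1 N \<kappa> n1 n2" and "b2 \<equiv> bb2 N \<kappa> n1 n2"
    and "f1 \<equiv> ff1 N \<kappa> lam (bb1 N \<kappa> n1 n2)
             (cint w1 w2 (\<lambda>x. exp (u1 x + v1 x)))
             (cint w1 w2 (\<lambda>x. exp (2 * u1 x + 2 * v1 x)))
             (cint w1 w2 (\<lambda>x. exp (u1 x + u2 x + v1 x + v2 x)))"
    and "f2 \<equiv> ff2 N \<kappa> lam (bb2 N \<kappa> n1 n2)
             (cint w1 w2 (\<lambda>x. exp (u2 x + v2 x)))
             (cint w1 w2 (\<lambda>x. exp (2 * u2 x + 2 * v2 x)))
             (cint w1 w2 (\<lambda>x. exp (u1 x + u2 x + v1 x + v2 x)))"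
  shows "(\<exists>!X0. X0 > 0 \<and> X0 - f1 (f2 X0) = 0) \<and>
    (\<forall>X0 c1 c2. X0 > 0 \<and> X0 - f1 (f2 X0) = 0 \<and> exp c1 = X0 \<and> exp c2 = f2 X0 \<longrightarrow>
      (real N - 1 + \<kappa>) * cint w1 w2 (\<lambda>x. exp (2 * u1 x + 2 * (v1 x + c1)))
        - real N * cint w1 w2 (\<lambda>x. exp (u1 x + (v1 x + c1)))
        - (\<kappa> - 1) * cint w1 w2 (\<lambda>x. exp (u1 x + u2 x + (v1 x + c1) + (v2 x + c2)))
        + b1 / lam = 0 \<and>
      (1 / (real N - 1) + \<kappa>) * cint w1 w2 (\<lambda>x. exp (2 * u2 x + 2 * (v2 x + c2)))
        - real N / (real N - 1) * cint w1 w2 (\<lambda>x. exp (u2 x + (v2 x + c2)))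
        - (\<kappa> - 1) * cint w1 w2 (\<lambda>x. exp (u1 x + u2 x + (v1 x + c1) + (v2 x + c2)))
        + b2 / lam = 0)"
  proof -
  define n where "n = real N"
  have n2: "n \<ge> 2" using N unfolding n_def by simp
  have hN1: "real N - 1 > 0" and hN: "real N > 0" using N by auto
  define c where "c = \<kappa> - 1"
  have c0: "c > 0" using kappa unfolding c_def by simp
  define a1 where "a1 = real N - 1 + \<kappa>"
  define a2 where "a2 = 1 / (real N - 1) + \<kappa>"
  have a1c: "a1 > c" unfolding a1_def c_def using n2 n_def by simp
  have a2c: "a2 > c"
  proof -
    have "real N - 1 > 0" using N by simp
    then have "1 / (real N - 1) > 0" by simp
    then show ?thesis unfolding a2_def c_def by linarith
  qed
  have ac: "c^2 < a1 * a2" using a1c a2c c0 unfolding power2_eq_square by (intro mult_strict_mono) auto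
  have b1nn: "b1 \<ge> 0" unfolding b1_def bb1_def using kappa N
    by (intro divide_nonneg_pos mult_nonneg_nonneg add_nonneg_nonneg) auto
  have b2nn: "b2 \<ge> 0" unfolding b2_def bb2_def using kappa N
    by (intro divide_nonneg_pos mult_nonneg_nonneg add_nonneg_nonneg mult_pos_pos) auto
  from cell_geom[OF lat] obtain m r where C: "cell w1 w2 \<in> sets lborel"
    "emeasure lborel (cell w1 w2) < \<infinity>" and mr: "r > 0" "ball m r \<subseteq> cell w1 w2" by blast
  have mu1: "u1 \<in> borel_measurable lborel" using u1 unfolding u0_sol_def by simp
  have mu2: "u2 \<in> borel_measurable lborel" using u2 unfolding u0_sol_def by simp
  have mv1: "v1 \<in> borel_measurable lborel" and mv2: "v2 \<in> borel_measurable lborel"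
    using adm unfolding admissible_def W12dot_def W12_def L2per_def by auto
  define A1 where "A1 = cint w1 w2 (\<lambda>x. exp (u1 x + v1 x))"
  define B1 where "B1 = cint w1 w2 (\<lambda>x. exp (2 * u1 x + 2 * v1 x))"
  define A2 where "A2 = cint w1 w2 (\<lambda>x. exp (u2 x + v2 x))"
  define B2 where "B2 = cint w1 w2 (\<lambda>x. exp (2 * u2 x + 2 * v2 x))"
  define E where "E = cint w1 w2 (\<lambda>x. exp (u1 x + u2 x + v1 x + v2 x))"
  have A1: "A1 > 0" "B1 > 0" using exp_facts[OF C mr mu1 mv1 int1] unfolding A1_def B1_def cint_def by auto
  have A2: "A2 > 0" "B2 > 0" using exp_facts[OF C mr mu2 mv2 int2] unfolding A2_def B2_def cint_def by auto
  have E0: "E \<ge> 0" unfolding E_def cint_def set_lebesgue_integral_def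
    by (intro integral_nonneg_AE) simp
  have ES: "E^2 \<le> B1 * B2"
  proof -
    define s where "s = sqrt B1"
    define q where "q = sqrt B2"
    have sq: "s > 0" "q > 0" "s^2 = B1" "q^2 = B2" unfolding s_def q_def using A1 A2 by auto
    have "E \<le> ((q/s) * B1 + B2 / (q/s)) / 2"
      unfolding E_def B1_def B2_def cint_def using sq
      by (intro cs_lemma[OF C(1) mu1 mv1 mu2 mv2 int1 int2]) auto
    also have "\<dots> = s * q" using sq by (simp add: field_simps power2_eq_square)
    finally have "E \<le> s * q" .
    then have "E^2 \<le> (s*q)^2" using E0 by (intro power_mono) auto
    then show ?thesis using sq by (simp add: power_mult_distrib)
  qed
  define D1 where "D1 = 2 * (real N - 1 + \<kappa>) * B1"
  define K1 where "K1 = 4 * (real N - 1 + \<kappa>) * b1 / lam * B1"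
  define D2 where "D2 = 2 * (1 / (real N - 1) + \<kappa>) * B2"
  define K2 where "K2 = 4 * (1 + (real N - 1) * \<kappa>) * b2 / ((real N - 1) * lam) * B2"
  define P1 where "P1 = (\<lambda>Y. real N * A1 + (\<kappa> - 1) * Y * E)"
  define P2 where "P2 = (\<lambda>X. real N / (real N - 1) * A2 + (\<kappa> - 1) * X * E)"
  have f1eq: "f1 Y = GG D1 K1 (P1 Y)" for Y
    unfolding f1_def ff1_def Let_def GG_def D1_def K1_def P1_def A1_def B1_def E_def b1_def ..
  have f2eq: "f2 X = GG D2 K2 (P2 X)" for X
    unfolding f2_def ff2_def Let_def GG_def D2_def K2_def P2_def A2_def B2_def E_def b2_def ..
  have D1: "D1 > 0" unfolding D1_def using A1 a1c c0 a1_def by simp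
  have D2: "D2 > 0" unfolding D2_def using A2 a2c c0 a2_def by simp
  have K1: "K1 \<ge> 0" unfolding K1_def using A1 a1c c0 a1_def b1nn lam by simp
  have K2: "K2 \<ge> 0" unfolding K2_def using A2 b2nn lam N kappa by simp
  have adm1: "(cint w1 w2 (\<lambda>x. exp (u1 x + v1 x)))\<^sup>2 \<ge>
        4 * (real N - 1 + \<kappa>) * bb1 N \<kappa> n1 n2 / ((real N)\<^sup>2 * lam) *
          cint w1 w2 (\<lambda>x. exp (2 * u1 x + 2 * v1 x))"
   and adm2: "(cint w1 w2 (\<lambda>x. exp (u2 x + v2 x)))\<^sup>2 \<ge>
        4 * (real N - 1) * (1 + (real N - 1) * \<kappa>) * bb2 N \<kappa> n1 n2 / ((real N)\<^sup>2 * lam) *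
          cint w1 w2 (\<lambda>x. exp (2 * u2 x + 2 * v2 x))"
    using adm unfolding admissible_def by auto
  have K1A: "K1 \<le> (real N * A1)^2"
  proof -
    have "K1 = (real N)^2 * (4 * (real N - 1 + \<kappa>) * b1 / ((real N)\<^sup>2 * lam) * B1)"
      unfolding K1_def using N lam by (simp add: field_simps)
    also have "\<dots> \<le> (real N)^2 * A1^2"
      using adm1 unfolding A1_def B1_def b1_def by (intro mult_left_mono) auto
    finally show ?thesis by (simp add: power_mult_distrib)
  qed
  have K2A: "K2 \<le> (real N / (real N - 1) * A2)^2"
  proof -
    have "K2 = (real N / (real N - 1))^2 * (4 * (real N - 1) * (1 + (real N - 1) * \<kappa>) * b2 / ((real N)\<^sup>2 * lam) * B2)"
      unfolding K2_def using hN1 hN lam by (intro K2_helper) auto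
    also have "\<dots> \<le> (real N / (real N - 1))^2 * A2^2"
      using adm2 unfolding A2_def B2_def b2_def by (intro mult_left_mono) auto
    finally show ?thesis by (simp only: power_mult_distrib)
  qed
  have dom1: "0 \<le> P1 Y \<and> K1 \<le> (P1 Y)^2 \<and> real N * A1 \<le> P1 Y" if "Y \<ge> 0" for Y
  proof -
    have "real N * A1 \<le> P1 Y" unfolding P1_def using that E0 kappa by simp
    moreover have "real N * A1 \<ge> 0" using A1 by simp
    ultimately have "(real N * A1)^2 \<le> (P1 Y)^2" by (intro power_mono) auto
    with K1A \<open>real N * A1 \<le> P1 Y\<close> \<open>real N * A1 \<ge> 0\<close> show ?thesis by linarith
  qed
  have dom2: "0 \<le> P2 X \<and> K2 \<le> (P2 X)^2" if "X \<ge> 0" for X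
  proof -
    have "real N / (real N - 1) * A2 \<le> P2 X" unfolding P2_def using that E0 kappa by simp
    moreover have "real N / (real N - 1) * A2 \<ge> 0" using A2 N by simp
    ultimately have "(real N / (real N - 1) * A2)^2 \<le> (P2 X)^2" by (intro power_mono) auto
    with K2A \<open>real N / (real N - 1) * A2 \<le> P2 X\<close> \<open>real N / (real N - 1) * A2 \<ge> 0\<close> show ?thesis by linarith
  qed
  have f1low: "f1 Y \<ge> real N * A1 / D1" if "Y \<ge> 0" for Y
  proof -
    have "real N * A1 / D1 \<le> P1 Y / D1" using dom1[OF that] D1 by (intro divide_right_mono) auto
    also have "\<dots> \<le> f1 Y" unfolding f1eq using GG_lower[OF D1] dom1[OF that] by auto
    finally show ?thesis .
  qed
  have f1pos: "f1 Y > 0" if "Y \<ge> 0" for Y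
  proof -
    have "real N * A1 / D1 > 0" using A1 D1 hN by simp
    then show ?thesis using f1low[OF that] by linarith
  qed
  have f1mono: "f1 Y \<le> f1 Y'" if "0 \<le> Y" "Y \<le> Y'" for Y Y'
  proof -
    have "P1 Y \<le> P1 Y'" unfolding P1_def using that E0 c0 c_def by (simp add: mult_right_mono)
    then show ?thesis unfolding f1eq using GG_mono[OF D1] dom1[OF that(1)] by auto
  qed
  have f1up: "f1 Y \<le> 2 * P1 Y / D1" if "Y \<ge> 0" for Y
    unfolding f1eq using GG_upper[OF D1] dom1[OF that] K1 by auto
  have f2nn: "f2 X \<ge> 0" if "X \<ge> 0" for X
  proof -
    have "P2 X / D2 \<ge> 0" using dom2[OF that] D2 by simp
    also have "P2 X / D2 \<le> f2 X" unfolding f2eq using GG_lower[OF D2] dom2[OF that] by auto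
    finally show ?thesis .
  qed
  have f2up: "f2 X \<le> 2 * P2 X / D2" if "X \<ge> 0" for X
    unfolding f2eq using GG_upper[OF D2] dom2[OF that] K2 by auto
  have f1sub: "t * f1 Y < f1 (t * Y)" if "Y \<ge> 0" "0 < t" "t < 1" for Y t
  proof -
    have aff: "t * P1 Y + (1 - t) * P1 0 = P1 (t * Y)" unfolding P1_def by (rule aff_lemma)
    have "t * f1 Y + (1 - t) * f1 0 \<le> f1 (t * Y)"
      unfolding f1eq aff[symmetric] using dom1[OF that(1)] dom1[of 0] that
      by (intro GG_concave[OF D1 K1]) auto
    moreover have "(1 - t) * f1 0 > 0" using f1pos[of 0] that by simp
    ultimately show ?thesis by linarith
  qed
  have f2sub: "t * f2 X \<le> f2 (t * X)" if "X \<ge> 0" "0 < t" "t < 1" for X t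
  proof -
    have aff: "t * P2 X + (1 - t) * P2 0 = P2 (t * X)" unfolding P2_def by (rule aff_lemma)
    have "t * f2 X + (1 - t) * f2 0 \<le> f2 (t * X)"
      unfolding f2eq aff[symmetric] using dom2[OF that(1)] dom2[of 0] that
      by (intro GG_concave[OF D2 K2]) auto
    moreover have "(1 - t) * f2 0 \<ge> 0" using f2nn[of 0] that by simp
    ultimately show ?thesis by linarith
  qed
  have uniq_lt: False if "0 < X" "X < Y" "X - f1 (f2 X) = 0" "Y - f1 (f2 Y) = 0" for X Y
  proof -
    define t where "t = X / Y"
    have t: "0 < t" "t < 1" "t * Y = X" unfolding t_def using that by auto
    have "t * f2 Y \<le> f2 (t * Y)" using f2sub[of Y t] t that by auto
    moreover have "t * f2 Y \<ge> 0" using f2nn[of Y] t that by auto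
    ultimately have "f1 (t * f2 Y) \<le> f1 (f2 (t * Y))" by (intro f1mono) auto
    moreover have "t * f1 (f2 Y) < f1 (t * f2 Y)" using f1sub[of "f2 Y" t] f2nn[of Y] t that by auto
    ultimately have "t * f1 (f2 Y) < f1 (f2 X)" using t by simp
    then show False using that t by simp
  qed
  define \<beta> where "\<beta> = 2 * (c * E * (2 * (c * E) / D2)) / D1"
  define \<alpha> where "\<alpha> = 2 * (real N * A1 + c * E * (2 * (real N / (real N - 1) * A2) / D2)) / D1"
  have hbound: "f1 (f2 X) \<le> \<alpha> + \<beta> * X" if "X \<ge> 0" for X
  proof -
    have "f1 (f2 X) \<le> 2 * P1 (f2 X) / D1" using f1up f2nn that by auto
    also have "\<dots> = 2 * (real N * A1 + c * E * f2 X) / D1" unfolding P1_def c_def by (simp add: algebra_simps)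
    also have "\<dots> \<le> 2 * (real N * A1 + c * E * (2 * P2 X / D2)) / D1"
      using f2up[OF that] D1 c0 E0 by (intro divide_right_mono mult_left_mono add_left_mono mult_nonneg_nonneg) auto
    also have "\<dots> = \<alpha> + \<beta> * X" unfolding \<alpha>_def \<beta>_def P2_def c_def[symmetric] using D1 D2 by (intro ab_lemma) auto
    finally show ?thesis .
  qed
  have \<alpha>0: "\<alpha> \<ge> 0" unfolding \<alpha>_def using A1 A2 E0 c0 D1 D2 hN hN1 by simp
  have \<beta>1: "\<beta> < 1"
  proof -
    have D1a: "D1 = 2 * a1 * B1" unfolding D1_def a1_def ..
    have D2a: "D2 = 2 * a2 * B2" unfolding D2_def a2_def ..
    have "a1 > 0" "a2 > 0" using a1c a2c c0 by auto
    then have "\<beta> = c^2 * E^2 / (a1 * a2 * B1 * B2)" unfolding \<beta>_def D1a D2a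
      using A1 A2 by (simp add: field_simps power2_eq_square)
    also have "\<dots> < 1"
    proof -
      have "c^2 * E^2 \<le> c^2 * (B1 * B2)" using ES by (intro mult_left_mono) auto
      also have "\<dots> < a1 * a2 * (B1 * B2)" using ac A1 A2 by (intro mult_strict_right_mono) auto
      finally show ?thesis using A1 A2 a1c a2c c0 by (simp add: field_simps)
    qed
    finally show ?thesis .
  qed
  define M where "M = \<alpha> / (1 - \<beta>) + 1"
  have M0: "M > 0"
  proof -
    have "\<alpha> / (1 - \<beta>) \<ge> 0" using \<alpha>0 \<beta>1 by simp
    then show ?thesis unfolding M_def by linarith
  qed
  have FM: "M - f1 (f2 M) \<ge> 0"
  proof -
    have "\<alpha> + \<beta> * M \<le> M"
    proof -
      have "\<alpha> = (1 - \<beta>) * (M - 1)" unfolding M_def using \<beta>1 by (simp add: field_simps)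
      then have "M - (\<alpha> + \<beta> * M) = 1 - \<beta>" by (simp add: algebra_simps)
      then show ?thesis using \<beta>1 by simp
    qed
    then show ?thesis using hbound[of M] M0 by simp
  qed
  have F0: "0 - f1 (f2 0) < 0" using f1pos f2nn by simp
  have cont: "continuous_on {0..M} (\<lambda>X. X - f1 (f2 X))"
    unfolding f1eq f2eq GG_def P1_def P2_def using D1 D2 by (auto intro!: continuous_intros)
  obtain X0 where X0: "0 \<le> X0" "X0 \<le> M" "X0 - f1 (f2 X0) = 0"
    using IVT'[of "\<lambda>X. X - f1 (f2 X)" 0 0 M] F0 FM M0 cont by auto
  have X0pos: "X0 > 0" using X0 F0 by (cases "X0 = 0") auto
  have part1: "\<exists>!X0. X0 > 0 \<and> X0 - f1 (f2 X0) = 0"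
  proof (rule ex_ex1I)
    show "\<exists>X0. X0 > 0 \<and> X0 - f1 (f2 X0) = 0" using X0 X0pos by auto
  next
    fix X Y assume "X > 0 \<and> X - f1 (f2 X) = 0" "Y > 0 \<and> Y - f1 (f2 Y) = 0"
    then show "X = Y" using uniq_lt by (metis linorder_neqE_linordered_idom)
  qed
  have part2: "\<forall>X0 c1 c2. X0 > 0 \<and> X0 - f1 (f2 X0) = 0 \<and> exp c1 = X0 \<and> exp c2 = f2 X0 \<longrightarrow>
      (real N - 1 + \<kappa>) * cint w1 w2 (\<lambda>x. exp (2 * u1 x + 2 * (v1 x + c1)))
        - real N * cint w1 w2 (\<lambda>x. exp (u1 x + (v1 x + c1)))
        - (\<kappa> - 1) * cint w1 w2 (\<lambda>x. exp (u1 x + u2 x + (v1 x + c1) + (v2 x + c2)))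
        + b1 / lam = 0 \<and>
      (1 / (real N - 1) + \<kappa>) * cint w1 w2 (\<lambda>x. exp (2 * u2 x + 2 * (v2 x + c2)))
        - real N / (real N - 1) * cint w1 w2 (\<lambda>x. exp (u2 x + (v2 x + c2)))
        - (\<kappa> - 1) * cint w1 w2 (\<lambda>x. exp (u1 x + u2 x + (v1 x + c1) + (v2 x + c2)))
        + b2 / lam = 0"
  proof (intro allI impI)
    fix X0 c1 c2
    assume h: "X0 > 0 \<and> X0 - f1 (f2 X0) = 0 \<and> exp c1 = X0 \<and> exp c2 = f2 X0"
    define Y0 where "Y0 = f2 X0"
    have Y0: "Y0 \<ge> 0" using f2nn h unfolding Y0_def by auto
    have X0eq: "f1 Y0 = X0" using h unfolding Y0_def by simp
    have ec1: "exp c1 = X0" and ec2: "exp c2 = Y0" using h unfolding Y0_def by auto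
    have e1: "cint w1 w2 (\<lambda>x. exp (2 * u1 x + 2 * (v1 x + c1))) = X0^2 * B1"
    proof -
      have "(\<lambda>x. exp (2 * u1 x + 2 * (v1 x + c1))) = (\<lambda>x. (exp c1)^2 * exp (2 * u1 x + 2 * v1 x))"
        by (rule ext) (simp add: exp_add[symmetric] power2_eq_square algebra_simps)
      then show ?thesis unfolding B1_def cint_def ec1 by simp
    qed
    have e2: "cint w1 w2 (\<lambda>x. exp (u1 x + (v1 x + c1))) = X0 * A1"
    proof -
      have "(\<lambda>x. exp (u1 x + (v1 x + c1))) = (\<lambda>x. exp c1 * exp (u1 x + v1 x))"
        by (rule ext) (simp add: exp_add[symmetric] algebra_simps)
      then show ?thesis unfolding A1_def cint_def ec1 by simp
    qed
    have e3: "cint w1 w2 (\<lambda>x. exp (2 * u2 x + 2 * (v2 x + c2))) = Y0^2 * B2"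
    proof -
      have "(\<lambda>x. exp (2 * u2 x + 2 * (v2 x + c2))) = (\<lambda>x. (exp c2)^2 * exp (2 * u2 x + 2 * v2 x))"
        by (rule ext) (simp add: exp_add[symmetric] power2_eq_square algebra_simps)
      then show ?thesis unfolding B2_def cint_def ec2 by simp
    qed
    have e4: "cint w1 w2 (\<lambda>x. exp (u2 x + (v2 x + c2))) = Y0 * A2"
    proof -
      have "(\<lambda>x. exp (u2 x + (v2 x + c2))) = (\<lambda>x. exp c2 * exp (u2 x + v2 x))"
        by (rule ext) (simp add: exp_add[symmetric] algebra_simps)
      then show ?thesis unfolding A2_def cint_def ec2 by simp
    qed
    have e5: "cint w1 w2 (\<lambda>x. exp (u1 x + u2 x + (v1 x + c1) + (v2 x + c2))) = X0 * Y0 * E"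
    proof -
      have "(\<lambda>x. exp (u1 x + u2 x + (v1 x + c1) + (v2 x + c2))) =
          (\<lambda>x. (exp c1 * exp c2) * exp (u1 x + u2 x + v1 x + v2 x))"
        by (rule ext) (simp add: exp_add[symmetric] algebra_simps)
      then show ?thesis unfolding E_def cint_def ec1 ec2 by simp
    qed
    have r1: "(a1 * B1) * (GG (2 * (a1 * B1)) (4 * (a1 * B1) * (b1 / lam)) (P1 Y0))^2
       - P1 Y0 * GG (2 * (a1 * B1)) (4 * (a1 * B1) * (b1 / lam)) (P1 Y0) + b1 / lam = 0"
    proof (rule GG_root)
      show "a1 * B1 \<noteq> 0" using A1 a1c c0 by simp
      have "4 * (a1 * B1) * (b1 / lam) = K1" unfolding K1_def a1_def by simp
      then show "4 * (a1 * B1) * (b1 / lam) \<le> (P1 Y0)^2" using dom1[OF Y0] by simp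
    qed
    have "GG (2 * (a1 * B1)) (4 * (a1 * B1) * (b1 / lam)) (P1 Y0) = f1 Y0"
    proof -
      have "2 * (a1 * B1) = D1" "4 * (a1 * B1) * (b1 / lam) = K1" unfolding K1_def D1_def a1_def by simp_all
      then show ?thesis unfolding f1eq by simp
    qed
    with r1 X0eq have r1': "(a1 * B1) * X0^2 - P1 Y0 * X0 + b1 / lam = 0" by simp
    have q1: "(real N - 1 + \<kappa>) * (X0^2 * B1) - real N * (X0 * A1) - (\<kappa> - 1) * (X0 * Y0 * E) + b1 / lam
       = (a1 * B1) * X0^2 - P1 Y0 * X0 + b1 / lam" unfolding a1_def P1_def by (simp add: algebra_simps)
    have r2: "(a2 * B2) * (GG (2 * (a2 * B2)) (4 * (a2 * B2) * (b2 / lam)) (P2 X0))^2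
       - P2 X0 * GG (2 * (a2 * B2)) (4 * (a2 * B2) * (b2 / lam)) (P2 X0) + b2 / lam = 0"
    proof (rule GG_root)
      show "a2 * B2 \<noteq> 0" using A2 a2c c0 by simp
      have "4 * (a2 * B2) * (b2 / lam) = K2" unfolding K2_def a2_def using hN1 lam
        by (intro K2_helper2[symmetric]) auto
      then show "4 * (a2 * B2) * (b2 / lam) \<le> (P2 X0)^2" using dom2 h by simp
    qed
    have "GG (2 * (a2 * B2)) (4 * (a2 * B2) * (b2 / lam)) (P2 X0) = f2 X0"
    proof -
      have "4 * (a2 * B2) * (b2 / lam) = K2" unfolding K2_def a2_def using hN1 lam
        by (intro K2_helper2[symmetric]) auto
      moreover have "2 * (a2 * B2) = D2" unfolding D2_def a2_def by simp
      ultimately show ?thesis unfolding f2eq by simp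
    qed
    with r2 have r2': "(a2 * B2) * Y0^2 - P2 X0 * Y0 + b2 / lam = 0" unfolding Y0_def by simp
    have q2: "(1 / (real N - 1) + \<kappa>) * (Y0^2 * B2) - real N / (real N - 1) * (Y0 * A2) - (\<kappa> - 1) * (X0 * Y0 * E) + b2 / lam
       = (a2 * B2) * Y0^2 - P2 X0 * Y0 + b2 / lam" unfolding a2_def P2_def by (simp add: algebra_simps)
    show "(real N - 1 + \<kappa>) * cint w1 w2 (\<lambda>x. exp (2 * u1 x + 2 * (v1 x + c1)))
        - real N * cint w1 w2 (\<lambda>x. exp (u1 x + (v1 x + c1)))
        - (\<kappa> - 1) * cint w1 w2 (\<lambda>x. exp (u1 x + u2 x + (v1 x + c1) + (v2 x + c2)))
        + b1 / lam = 0 \<and>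
      (1 / (real N - 1) + \<kappa>) * cint w1 w2 (\<lambda>x. exp (2 * u2 x + 2 * (v2 x + c2)))
        - real N / (real N - 1) * cint w1 w2 (\<lambda>x. exp (u2 x + (v2 x + c2)))
        - (\<kappa> - 1) * cint w1 w2 (\<lambda>x. exp (u1 x + u2 x + (v1 x + c1) + (v2 x + c2)))
        + b2 / lam = 0"
      unfolding e1 e2 e3 e4 e5 using q1 q2 r1' r2' by simp
  qed
  show ?thesis using part1 part2 by blast
qed

end
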